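(* Let $(L,\le,(\sqsubseteq_\alpha)_{\alpha<\kappa})$ be a model of Axioms 1–4 with $\kappa$ a limit ordinal. Let $\alpha<\kappa$, $x\in L$, $X\subseteq(x]_\alpha$, and let $y=\bigsqcup_\alpha X$. Then $y$ is the $\le$-least element of $[y]_\alpha$, and $y\sqsubseteq_{\alpha+1}z$ for all $z\in[y]_\alpha$.
   Context: Setting (model of Axioms 1–4). Let $(L,\le)$ be a complete lattice with join operation $\bigvee$ and least element $\perp$. Let $\kappa>0$ be an ordinal, and for each ordinal $\alpha<\kappa$ let $\sqsubseteq_\alpha$ be a preorder on $L$. Derived relations: - $x=_\alpha y$ means $x\sqsubseteq_\alpha y$ and $y\sqsubseteq_\alpha x$. - $x\sqsubset_\alpha y$ means $x\sqsubseteq_\alpha y$ and not $x=_\alpha y$. Derived sets, for $x\in L$ and $\alpha<\kappa$: - $(x]_\alpha=\{y\in L:\forall\beta<\alpha,\ x=_\beta y\}$. - $[x]_\alpha=\{y\in L: x=_\alpha y\}$. For a set $X$, $X\sqsubseteq_\alpha y$ means $x\sqsubseteq_\alpha y$ for all $x\in X$. The structure is a model of Axioms 1–4 if: - (A1) for all $\alpha<\beta<\kappa$, $x\sqsubseteq_\beta y$ implies $x=_\alpha y$; - (A2) $\bigcap_{\alpha<\kappa}=_\alpha$ is the identity relation on $L$; - (A3) for every $x\in L$, every $\alpha<\kappa$ and every $X\subseteq(x]_\alpha$ there is $y\in(x]_\alpha$ with $X\sqsubseteq_\alpha y$ such that for all $z\in(x]_\alpha$ with $X\sqsubseteq_\alpha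 z$ we have $y\sqsubseteq_\alpha z$ and $y\le z$; - (A4) for every nonempty $X\subseteq L$, every $\alpha<\kappa$ and every $y\in L$, if $y=_\alpha x$ for all $x\in X$ then $y=_\alpha\bigvee X$. The element $y$ of (A3) is unique and is denoted $\bigsqcup_\alpha X$ (relative to $(x]_\alpha$). *)

theory Defs
  imports Main
begin

text \<open>Ordinals below kappa are modelled by a well-ordered type 'k (order type kappa;
nonempty types give kappa > 0). The family of preorders is sq :: 'k => 'a => 'a => bool,
where sq al x y means x sqsubseteq_al y.\<close>

definition eqa :: "('k \<Rightarrow> 'a \<Rightarrow> 'a \<Rightarrow> bool) \<Rightarrow> 'k \<Rightarrow> 'a \<Rightarrow> 'a \<Rightarrow> bool" where
  "eqa sq al x y \<longleftrightarrow> sq al x y \<and> sq al y x"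

definition sqless :: "('k \<Rightarrow> 'a \<Rightarrow> 'a \<Rightarrow> bool) \<Rightarrow> 'k \<Rightarrow> 'a \<Rightarrow> 'a \<Rightarrow> bool" where
  "sqless sq al x y \<longleftrightarrow> sq al x y \<and> \<not> eqa sq al x y"

definition downcl :: "('k::wellorder \<Rightarrow> 'a \<Rightarrow> 'a \<Rightarrow> bool) \<Rightarrow> 'k \<Rightarrow> 'a \<Rightarrow> 'a set" where
  "downcl sq al x = {y. \<forall>be<al. eqa sq be x y}"

definition eqcl :: "('k \<Rightarrow> 'a \<Rightarrow> 'a \<Rightarrow> bool) \<Rightarrow> 'k \<Rightarrow> 'a \<Rightarrow> 'a set" where
  "eqcl sq al x = {y. eqa sq al x y}"

text \<open>y is the element given by (A3) for X relative to (x]_al, i.e. y = Sqcup_al X\<close>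
definition is_sqlub :: "('k::wellorder \<Rightarrow> 'a::complete_lattice \<Rightarrow> 'a \<Rightarrow> bool) \<Rightarrow> 'k \<Rightarrow> 'a \<Rightarrow> 'a set \<Rightarrow> 'a \<Rightarrow> bool" where
  "is_sqlub sq al x X y \<longleftrightarrow>
     y \<in> downcl sq al x \<and> (\<forall>w\<in>X. sq al w y) \<and>
     (\<forall>z\<in>downcl sq al x. (\<forall>w\<in>X. sq al w z) \<longrightarrow> sq al y z \<and> y \<le> z)"

definition model_A1_4 :: "('k::wellorder \<Rightarrow> 'a::complete_lattice \<Rightarrow> 'a \<Rightarrow> bool) \<Rightarrow> bool" where
  "model_A1_4 sq \<longleftrightarrow>
     (\<forall>al. (\<forall>x. sq al x x) \<and> (\<forall>x y z. sq al x y \<longrightarrow> sq al y z \<longrightarrow> sq al x z)) \<and>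
     (\<forall>al be x y. al < be \<longrightarrow> sq be x y \<longrightarrow> eqa sq al x y) \<and>
     (\<forall>x y. (\<forall>al. eqa sq al x y) \<longrightarrow> x = y) \<and>
     (\<forall>x al X. X \<subseteq> downcl sq al x \<longrightarrow> (\<exists>y. is_sqlub sq al x X y)) \<and>
     (\<forall>X al y. X \<noteq> {} \<longrightarrow> (\<forall>x\<in>X. eqa sq al y x) \<longrightarrow> eqa sq al y (Sup X))"

definition limit_type :: "'k::wellorder itself \<Rightarrow> bool" where
  "limit_type _ \<longleftrightarrow> (\<forall>al::'k. \<exists>be. al < be)"

text \<open>al + 1 (successor ordinal), meaningful when kappa is a limit\<close>
definition osuc :: "'k::wellorder \<Rightarrow> 'k" where
  "osuc al = (LEAST be. al < be)"

end

theory Submission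
  imports Defs
begin

theorem mainTheorem5:
  fixes sq :: "'k::wellorder \<Rightarrow> 'a::complete_lattice \<Rightarrow> 'a \<Rightarrow> bool"
    and al :: 'k and x y :: 'a and X :: "'a set"
  assumes "model_A1_4 sq"
    and "limit_type TYPE('k)"
    and "X \<subseteq> downcl sq al x"
    and "is_sqlub sq al x X y"
  shows "y \<in> eqcl sq al y \<and> (\<forall>z\<in>eqcl sq al y. y \<le> z)
         \<and> (\<forall>z\<in>eqcl sq al y. sq (osuc al) y z)"
proof -
  have refl: "\<And>a w. sq a w w" and trans: "\<And>a u v w. sq a u v \<Longrightarrow> sq a v w \<Longrightarrow> sq a u w"
    and A1: "\<And>a b u v. a < b \<Longrightarrow> sq b u v \<Longrightarrow> eqa sq a u v"
    and A3: "\<And>u a Y. Y \<subseteq> downcl sq a u \<Longrightarrow> \<exists>v. is_sqlub sq a u Y v"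
    using assms(1) unfolding model_A1_4_def by simp_all
  have yd: "y \<in> downcl sq al x" and yX: "\<forall>w\<in>X. sq al w y"
    and ylub: "\<And>z. z\<in>downcl sq al x \<Longrightarrow> (\<forall>w\<in>X. sq al w z) \<Longrightarrow> sq al y z \<and> y \<le> z"
    using assms(4) unfolding is_sqlub_def by blast+
  have ex: "\<exists>be. al < be" using assms(2) unfolding limit_type_def by blast
  have alsuc: "al < osuc al" unfolding osuc_def using ex by (metis LeastI_ex)
  have sucle: "\<And>be. be < osuc al \<Longrightarrow> be \<le> al"
    unfolding osuc_def by (metis not_less_Least not_le)
  have low: "\<And>z. z \<in> eqcl sq al y \<Longrightarrow> y \<le> z"
  proof -
    fix z assume "z \<in> eqcl sq al y"
    hence e: "sq al y z" "sq al z y" by (auto simp: eqcl_def eqa_def)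
    have "z \<in> downcl sq al x"
      unfolding downcl_def
    proof (intro CollectI allI impI)
      fix be assume b: "be < al"
      have "eqa sq be x y" using yd b by (auto simp: downcl_def)
      moreover have "eqa sq be y z" using A1[OF b e(1)] .
      ultimately show "eqa sq be x z" unfolding eqa_def using trans[of be x y z] trans[of be z y x] by simp
    qed
    moreover have "\<forall>w\<in>X. sq al w z"
    proof
      fix w assume "w \<in> X" thus "sq al w z" using yX e(1) trans[of al w y z] by simp
    qed
    ultimately show "y \<le> z" using ylub by blast
  qed
  have dc: "\<And>z. z \<in> eqcl sq al y \<Longrightarrow> z \<in> downcl sq (osuc al) y"
  proof -
    fix z assume "z \<in> eqcl sq al y"
    hence e: "sq al y z" "sq al z y" by (auto simp: eqcl_def eqa_def)
    show "z \<in> downcl sq (osuc al) y"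
      unfolding downcl_def
    proof (intro CollectI allI impI)
      fix be assume "be < osuc al"
      hence "be \<le> al" by (rule sucle)
      thus "eqa sq be y z"
      proof (cases "be = al")
        case True thus ?thesis using e by (simp add: eqa_def)
      next
        case False thus ?thesis using A1[OF _ e(1)] \<open>be \<le> al\<close> by simp
      qed
    qed
  qed
  obtain b where b: "is_sqlub sq (osuc al) y {} b" using A3[of "{}"] by blast
  hence bd: "b \<in> downcl sq (osuc al) y"
    and bl: "\<And>z. z\<in>downcl sq (osuc al) y \<Longrightarrow> sq (osuc al) b z \<and> b \<le> z"
    unfolding is_sqlub_def by auto
  have "eqa sq al y b" using bd alsuc by (auto simp: downcl_def)
  hence bcl: "b \<in> eqcl sq al y" by (simp add: eqcl_def)
  have yy: "y \<in> eqcl sq al y" by (simp add: eqcl_def eqa_def refl)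
  have "b \<le> y" using bl[OF dc[OF yy]] by blast
  moreover have "y \<le> b" using low[OF bcl] .
  ultimately have "b = y" by (rule order.antisym)
  hence "\<forall>z\<in>eqcl sq al y. sq (osuc al) y z" using bl dc by blast
  thus ?thesis using yy low by blast
qed

end
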